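(* Let $m\geq 2$ and $n\geq 2$ be integers, let $G_m$ be a graph of order $m$ and $H_n$ a graph of order $n$. Then $rvc(G_m \diamond H_n) \geq rvc(G_m)$.
   Context: All graphs are finite, simple, connected and undirected; $d$ denotes graph distance. For a graph $G$ and $k\in\mathbb{N}$, a rainbow vertex $k$-coloring of $G$ is a map $c:V(G)\to\{1,\dots,k\}$ such that every two vertices $u,v$ are joined by a path whose internal vertices all receive distinct colors (a rainbow vertex path). The rainbow vertex connection number $rvc(G)$ is the least $k$ for which $G$ has a rainbow vertex $k$-coloring. For graphs $G_m$ (order $m$) and $H_n$ (order $n$) on disjoint vertex sets, the edge corona $G_m\diamond H_n$ is obtained from one copy of $G_m$ and $|E(G_m)|$ vertex-disjoint copies of $H_n$, one copy for each edge of $G_m$, by joining the two end vertices of the $j$-th edge of $G_m$ to every vertex of the $j$-th copy of $H_n$, for each $j\in\{1,\dots,|E(G_m)|\}$. *)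

theory Defs
  imports Main
begin

definition simple_graph :: "'a set \<Rightarrow> 'a set set \<Rightarrow> bool" where
  "simple_graph V E \<longleftrightarrow> finite V \<and>
     (\<forall>e\<in>E. \<exists>u v. u \<in> V \<and> v \<in> V \<and> u \<noteq> v \<and> e = {u, v})"

definition is_path :: "'a set \<Rightarrow> 'a set set \<Rightarrow> 'a list \<Rightarrow> bool" where
  "is_path V E p \<longleftrightarrow> p \<noteq> [] \<and> set p \<subseteq> V \<and> distinct p \<and>
     (\<forall>i. Suc i < length p \<longrightarrow> {p ! i, p ! Suc i} \<in> E)"

definition connected_graph :: "'a set \<Rightarrow> 'a set set \<Rightarrow> bool" where
  "connected_graph V E \<longleftrightarrow>
     (\<forall>u\<in>V. \<forall>v\<in>V. \<exists>p. is_path V E p \<and> hd p = u \<and> last p = v)"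

definition rainbow_vertex_path :: "('a \<Rightarrow> nat) \<Rightarrow> 'a list \<Rightarrow> bool" where
  "rainbow_vertex_path c p \<longleftrightarrow> distinct (map c (butlast (tl p)))"

definition rv_coloring :: "'a set \<Rightarrow> 'a set set \<Rightarrow> ('a \<Rightarrow> nat) \<Rightarrow> nat \<Rightarrow> bool" where
  "rv_coloring V E c k \<longleftrightarrow> (\<forall>v\<in>V. c v \<in> {1..k}) \<and>
     (\<forall>u\<in>V. \<forall>v\<in>V. \<exists>p. is_path V E p \<and> hd p = u \<and> last p = v \<and> rainbow_vertex_path c p)"

definition rvc :: "'a set \<Rightarrow> 'a set set \<Rightarrow> nat" where
  "rvc V E = (LEAST k. \<exists>c. rv_coloring V E c k)"

text \<open>Edge corona: vertices Inl v (v in G) and Inr (e, h) (copy of h for edge e of G).\<close>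
definition ecorona_V :: "'a set \<Rightarrow> 'a set set \<Rightarrow> 'b set \<Rightarrow> ('a + ('a set \<times> 'b)) set" where
  "ecorona_V VG EG VH = Inl ` VG \<union> Inr ` (EG \<times> VH)"

definition ecorona_E :: "'a set set \<Rightarrow> 'b set \<Rightarrow> 'b set set \<Rightarrow> ('a + ('a set \<times> 'b)) set set" where
  "ecorona_E EG VH EH =
     {{Inl u, Inl v} | u v. {u, v} \<in> EG}
   \<union> {{Inr (e, h), Inr (e, h')} | e h h'. e \<in> EG \<and> {h, h'} \<in> EH}
   \<union> {{Inl u, Inr (e, h)} | u e h. e \<in> EG \<and> u \<in> e \<and> h \<in> VH}"

end

theory Submission
  imports Defs
begin

fun adj_chain :: "'a set set \<Rightarrow> 'a list \<Rightarrow> bool" where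
  "adj_chain E (x # y # xs) = ({x, y} \<in> E \<and> adj_chain E (y # xs))"
| "adj_chain E _ = True"

lemma adj_chain_iff: "adj_chain E p \<longleftrightarrow> (\<forall>i. Suc i < length p \<longrightarrow> {p ! i, p ! Suc i} \<in> E)"
proof (induction E p rule: adj_chain.induct)
  case (1 E x y xs)
  show ?case
  proof
    assume "adj_chain E (x # y # xs)"
    then show "\<forall>i. Suc i < length (x # y # xs) \<longrightarrow> {(x # y # xs) ! i, (x # y # xs) ! Suc i} \<in> E"
      using 1 by (auto simp: nth_Cons split: nat.splits)
  next
    assume h: "\<forall>i. Suc i < length (x # y # xs) \<longrightarrow> {(x # y # xs) ! i, (x # y # xs) ! Suc i} \<in> E"
    have "{x, y} \<in> E" using h[rule_format, of 0] by simp
    moreover have "\<forall>i. Suc i < length (y # xs) \<longrightarrow> {(y # xs) ! i, (y # xs) ! Suc i} \<in> E"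
    proof (intro allI impI)
      fix i assume "Suc i < length (y # xs)"
      then show "{(y # xs) ! i, (y # xs) ! Suc i} \<in> E" using h[rule_format, of "Suc i"] by simp
    qed
    ultimately show "adj_chain E (x # y # xs)" using 1 by simp
  qed
qed auto

lemma is_path_iff: "is_path V E p \<longleftrightarrow> p \<noteq> [] \<and> set p \<subseteq> V \<and> distinct p \<and> adj_chain E p"
  unfolding is_path_def adj_chain_iff by simp

lemma adj_chain_app: "adj_chain E (xs @ [y]) \<Longrightarrow> adj_chain E (y # ys) \<Longrightarrow> adj_chain E (xs @ y # ys)"
proof (induction xs)
  case Nil then show ?case by simp
next
  case (Cons a xs)
  then show ?case by (cases xs) auto
qed

lemma adj_chain_cons: "p \<noteq> [] \<Longrightarrow> {x, hd p} \<in> E \<Longrightarrow> adj_chain E p \<Longrightarrow> adj_chain E (x # p)"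
  by (cases p) auto

lemma adj_chain_snoc: "p \<noteq> [] \<Longrightarrow> {last p, y} \<in> E \<Longrightarrow> adj_chain E p \<Longrightarrow> adj_chain E (p @ [y])"
proof -
  assume a: "p \<noteq> []" "{last p, y} \<in> E" "adj_chain E p"
  have "adj_chain E (butlast p @ [last p])" using a by (simp add: append_butlast_last_id)
  then have "adj_chain E (butlast p @ [last p, y])" using adj_chain_app[of E "butlast p" "last p" "[y]"] a by simp
  then show ?thesis using a by (metis append_butlast_last_id append_Cons append_Nil append_assoc)
qed

lemma adj_chain_map: "adj_chain EG p \<Longrightarrow> adj_chain (ecorona_E EG VH EH) (map Inl p)"
  by (induction EG p rule: adj_chain.induct) (auto simp: ecorona_E_def)

lemma edge_ll: "{Inl w, Inl z} \<in> ecorona_E EG VH EH \<Longrightarrow> {w, z} \<in> EG"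
  unfolding ecorona_E_def by (auto simp: doubleton_eq_iff insert_commute)

lemma edge_lr: "{Inl w, Inr (e, h)} \<in> ecorona_E EG VH EH \<Longrightarrow> e \<in> EG \<and> w \<in> e"
  unfolding ecorona_E_def by (auto simp: doubleton_eq_iff)

lemma edge_rl: "{Inr (e, h), Inl w} \<in> ecorona_E EG VH EH \<Longrightarrow> e \<in> EG \<and> w \<in> e"
  using edge_lr by (metis insert_commute)

lemma edge_rr: "{Inr (e, h), Inr (e', h')} \<in> ecorona_E EG VH EH \<Longrightarrow> e' = e"
  unfolding ecorona_E_def by (auto simp: doubleton_eq_iff)

definition proj :: "('a + 'c) list \<Rightarrow> 'a list" where
  "proj xs = map projl (filter isl xs)"

lemma proj_simps[simp]: "proj [] = []" "proj (Inl a # xs) = a # proj xs" "proj (Inr b # xs) = proj xs"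
  "proj (xs @ ys) = proj xs @ proj ys"
  by (auto simp: proj_def)

lemma distinct_proj: "distinct xs \<Longrightarrow> distinct (proj xs)"
proof (induction xs)
  case (Cons x xs)
  then show ?case
    by (cases x) (auto simp: proj_def)
qed (simp)

lemma set_proj: "set (proj xs) = {a. Inl a \<in> set xs}"
  by (induction xs) (auto simp: proj_def split: sum.splits)

lemma map_proj: "map (\<lambda>v. c (Inl v)) (proj xs) = map c (filter isl xs)"
  by (induction xs) (auto simp: proj_def)

definition C where
  "C EG u x \<longleftrightarrow> (\<exists>w. x = Inl w \<and> {u, w} \<in> EG) \<or> (\<exists>e h. x = Inr (e, h) \<and> e \<in> EG \<and> u \<in> e)"

lemma key:
  assumes sg: "simple_graph VG EG"
  shows "C EG u x \<Longrightarrow> adj_chain (ecorona_E EG VH EH) (x # r) \<Longrightarrow> distinct (x # r)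
    \<Longrightarrow> Inl u \<notin> set (x # r) \<Longrightarrow> isl (last (x # r)) \<Longrightarrow> adj_chain EG (u # proj (x # r))"
proof (induction r arbitrary: x u)
  case Nil
  then show ?case by (cases x) (auto simp: C_def)
next
  case (Cons y r)
  have xy: "{x, y} \<in> ecorona_E EG VH EH" using Cons.prems by simp
  show ?case
  proof (cases x)
    case (Inl w)
    have uw: "{u, w} \<in> EG" using Cons.prems(1) Inl by (auto simp: C_def)
    have Cy: "C EG w y"
    proof (cases y)
      case (Inl z) then show ?thesis using xy \<open>x = Inl w\<close> edge_ll by (auto simp: C_def)
    next
      case (Inr b) then obtain e h where "b = (e, h)" by (cases b)
      then show ?thesis using xy \<open>x = Inl w\<close> edge_lr Inr by (fastforce simp: C_def)
    qed
    have "adj_chain EG (w # proj (y # r))"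
      using Cons.IH[OF Cy] Cons.prems Inl by auto
    then show ?thesis using uw Inl by simp
  next
    case (Inr b)
    then obtain e h where x: "x = Inr (e, h)" by (cases b) auto
    have ue: "e \<in> EG" "u \<in> e" using Cons.prems(1) x by (auto simp: C_def)
    have Cy: "C EG u y"
    proof (cases y)
      case (Inl w)
      have "w \<in> e" using xy x Inl edge_rl by metis
      moreover have "w \<noteq> u" using Cons.prems(4) Inl by auto
      moreover obtain a b where "e = {a, b}" using sg ue unfolding simple_graph_def by blast
      ultimately have "e = {u, w}" using ue by auto
      then show ?thesis using Inl ue by (auto simp: C_def)
    next
      case (Inr b') then obtain e' h' where "b' = (e', h')" by (cases b')
      then show ?thesis using xy x edge_rr Inr ue by (fastforce simp: C_def)
    qed
    have "adj_chain EG (u # proj (y # r))"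
      using Cons.IH[OF Cy] Cons.prems by auto
    then show ?thesis using x by simp
  qed
qed


lemma anchor:
  assumes sg: "simple_graph VG EG" and x: "x \<in> ecorona_V VG EG VH"
  shows "\<exists>a\<in>VG. x = Inl a \<or> (\<not> isl x \<and> {x, Inl a} \<in> ecorona_E EG VH EH)"
proof (cases x)
  case (Inl a) then show ?thesis using x by (auto simp: ecorona_V_def)
next
  case (Inr b)
  then obtain e h where xe: "x = Inr (e, h)" "e \<in> EG" "h \<in> VH" using x by (auto simp: ecorona_V_def)
  then obtain a b where "a \<in> VG" "e = {a, b}" using sg unfolding simple_graph_def by blast
  then have "{x, Inl a} \<in> ecorona_E EG VH EH" unfolding ecorona_E_def using xe by blast
  then show ?thesis using \<open>a \<in> VG\<close> xe by auto
qed

lemma inl_path: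
  assumes "is_path VG EG p"
  shows "is_path (ecorona_V VG EG VH) (ecorona_E EG VH EH) (map Inl p)"
  using assms adj_chain_map[of EG p VH EH] unfolding is_path_iff ecorona_V_def
  by (auto simp: distinct_map)

lemma corona_connected:
  assumes sg: "simple_graph VG EG" and cg: "connected_graph VG EG"
    and x: "x \<in> ecorona_V VG EG VH" and y: "y \<in> ecorona_V VG EG VH"
  shows "\<exists>p. is_path (ecorona_V VG EG VH) (ecorona_E EG VH EH) p \<and> hd p = x \<and> last p = y"
proof (cases "x = y")
  case True
  then show ?thesis using x by (intro exI[of _ "[x]"]) (auto simp: is_path_def)
next
  case False
  let ?V = "ecorona_V VG EG VH" and ?E = "ecorona_E EG VH EH"
  obtain a where a: "a \<in> VG" "x = Inl a \<or> (\<not> isl x \<and> {x, Inl a} \<in> ?E)" using anchor[OF sg x] by blast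
  obtain b where b: "b \<in> VG" "y = Inl b \<or> (\<not> isl y \<and> {y, Inl b} \<in> ?E)" using anchor[OF sg y] by blast
  obtain p where p: "is_path VG EG p" "hd p = a" "last p = b" using cg a b unfolding connected_graph_def by blast
  define q :: "('a + 'a set \<times> 'b) list" where "q = map Inl p"
  have q: "is_path ?V ?E q" "hd q = Inl a" "last q = Inl b" "q \<noteq> []"
    using inl_path[OF p(1), of VH EH] p unfolding q_def by (auto simp: is_path_def hd_map last_map)
  have qi: "isl z" if "z \<in> set q" for z using that unfolding q_def by auto
  define q1 where "q1 = (if isl x then q else x # q)"
  have q1: "is_path ?V ?E q1" "hd q1 = x" "last q1 = Inl b" "q1 \<noteq> []"
  proof -
    show "is_path ?V ?E q1"
    proof (cases "isl x")
      case True then show ?thesis using q q1_def by simp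
    next
      case f: False
      then have "{x, hd q} \<in> ?E" "x \<notin> set q" using a q qi by auto
      then show ?thesis using q q1_def f x adj_chain_cons[of q x ?E] by (auto simp: is_path_iff)
    qed
    show "hd q1 = x" using q a q1_def by auto
    show "last q1 = Inl b" using q q1_def by auto
    show "q1 \<noteq> []" using q q1_def by auto
  qed
  define q2 where "q2 = (if isl y then q1 else q1 @ [y])"
  have "is_path ?V ?E q2"
  proof (cases "isl y")
    case True then show ?thesis using q1 q2_def by simp
  next
    case f: False
    have "y \<notin> set q" using qi f by auto
    then have "y \<notin> set q1" using False q1_def by auto
    moreover have "{last q1, y} \<in> ?E" using b f q1 by (auto simp: insert_commute)
    ultimately show ?thesis using q1 q2_def f y adj_chain_snoc[of q1 y ?E] by (auto simp: is_path_iff)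
  qed
  moreover have "hd q2 = x" "last q2 = y" using q1 q2_def b by auto
  ultimately show ?thesis by blast
qed


lemma corona_finite:
  assumes "simple_graph VG EG" "simple_graph VH EH"
  shows "finite (ecorona_V VG EG VH)"
proof -
  have fV: "finite VG" "finite VH" using assms unfolding simple_graph_def by simp_all
  have "EG \<subseteq> Pow VG" using assms(1) unfolding simple_graph_def by fast
  then have "finite EG" using fV(1) by (simp add: finite_subset)
  then have "finite (EG \<times> VH)" using fV(2) by (rule finite_cartesian_product)
  then show ?thesis unfolding ecorona_V_def using fV(1) by simp
qed

lemma corona_colorable:
  assumes sg: "simple_graph VG EG" and cg: "connected_graph VG EG" and sh: "simple_graph VH EH"
  shows "\<exists>k c. rv_coloring (ecorona_V VG EG VH) (ecorona_E EG VH EH) c k"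
proof -
  let ?V = "ecorona_V VG EG VH" and ?E = "ecorona_E EG VH EH"
  obtain h where h: "bij_betw h {1..card ?V} ?V"
    using ex_bij_betw_nat_finite_1[OF corona_finite[OF sg sh]] by blast
  define c where "c = inv_into {1..card ?V} h"
  have cb: "bij_betw c ?V {1..card ?V}" using h c_def by (simp add: bij_betw_inv_into)
  have "rv_coloring ?V ?E c (card ?V)"
    unfolding rv_coloring_def
  proof (intro conjI ballI)
    fix v assume "v \<in> ?V" then show "c v \<in> {1..card ?V}" using cb bij_betwE by blast
  next
    fix u v assume "u \<in> ?V" "v \<in> ?V"
    then obtain p where p: "is_path ?V ?E p" "hd p = u" "last p = v"
      using corona_connected[OF sg cg] by blast
    have "set (butlast (tl p)) \<subseteq> ?V" using p(1) unfolding is_path_def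
      by (meson in_set_butlastD list.set_sel(2) subset_code(1) tl_Nil)
    moreover have "distinct (butlast (tl p))" using p(1) unfolding is_path_def
      by (simp add: distinct_butlast distinct_tl)
    ultimately have "rainbow_vertex_path c p" unfolding rainbow_vertex_path_def
      using cb by (metis distinct_map bij_betw_def inj_on_subset)
    then show "\<exists>p. is_path ?V ?E p \<and> hd p = u \<and> last p = v \<and> rainbow_vertex_path c p"
      using p by blast
  qed
  then show ?thesis by blast
qed

lemma transfer_coloring:
  assumes sg: "simple_graph VG EG"
    and rc: "rv_coloring (ecorona_V VG EG VH) (ecorona_E EG VH EH) c k"
  shows "rv_coloring VG EG (\<lambda>v. c (Inl v)) k"
  unfolding rv_coloring_def
proof (intro conjI ballI)
  let ?V = "ecorona_V VG EG VH" and ?E = "ecorona_E EG VH EH"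
  fix v assume "v \<in> VG" then show "c (Inl v) \<in> {1..k}" using rc
    unfolding rv_coloring_def ecorona_V_def by auto
next
  let ?V = "ecorona_V VG EG VH" and ?E = "ecorona_E EG VH EH"
  fix u v assume uv: "u \<in> VG" "v \<in> VG"
  show "\<exists>p. is_path VG EG p \<and> hd p = u \<and> last p = v \<and> rainbow_vertex_path (\<lambda>v. c (Inl v)) p"
  proof (cases "u = v")
    case True then show ?thesis using uv
      by (intro exI[of _ "[u]"]) (auto simp: is_path_def rainbow_vertex_path_def)
  next
    case False
    have "Inl u \<in> ?V" "Inl v \<in> ?V" using uv unfolding ecorona_V_def by auto
    then obtain p where p: "is_path ?V ?E p" "hd p = Inl u" "last p = Inl v" "rainbow_vertex_path c p"
      using rc unfolding rv_coloring_def by blast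
    have "p \<noteq> []" using p unfolding is_path_def by simp
    then obtain r where r: "p = Inl u # r" using p(2) by (cases p) auto
    then have "r \<noteq> []" using p(3) False by auto
    then obtain mid where mid: "r = mid @ [Inl v]" using p(3) r
      by (metis append_butlast_last_id last_ConsR)
    have pm: "p = Inl u # mid @ [Inl v]" using r mid by simp
    have pp: "p \<noteq> []" "set p \<subseteq> ?V" "distinct p" "adj_chain ?E p" using p(1) by (auto simp: is_path_iff)
    obtain x r' where xr: "r = x # r'" using \<open>r \<noteq> []\<close> by (cases r) auto
    have ux: "{Inl u, x} \<in> ?E" using pp(4) r xr by simp
    have Cx: "C EG u x"
    proof (cases x)
      case (Inl w) then show ?thesis using ux edge_ll by (auto simp: C_def)
    next
      case (Inr b) then obtain e h where "b = (e, h)" by (cases b)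
      then show ?thesis using ux edge_lr Inr by (fastforce simp: C_def)
    qed
    have "last (x # r') = Inl v" using xr mid by (metis last_snoc)
    moreover have "adj_chain ?E (x # r')" using pp(4) r xr by simp
    moreover have "distinct (x # r')" using pp(3) r xr by simp
    moreover have "Inl u \<notin> set (x # r')" using pp(3) r xr by simp
    ultimately have ac: "adj_chain EG (u # proj r)"
      using key[OF sg Cx, of VH EH r'] xr by simp
    have "proj p = u # proj r" using r by simp
    then have q1: "adj_chain EG (proj p)" using ac by simp
    have q2: "distinct (proj p)" using distinct_proj pp by blast
    have q3: "set (proj p) \<subseteq> VG" using pp(2) unfolding set_proj ecorona_V_def by auto
    have q4: "proj p = u # proj mid @ [v]" using pm by simp
    have "is_path VG EG (proj p)" unfolding is_path_iff using q1 q2 q3 q4 by (metis list.distinct(1))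
    moreover have "rainbow_vertex_path (\<lambda>v. c (Inl v)) (proj p)"
    proof -
      have "butlast (tl p) = mid" using pm by simp
      then have "distinct (map c mid)" using p(4) unfolding rainbow_vertex_path_def by simp
      then have "distinct (map c (filter isl mid))" by (rule distinct_map_filter)
      then show ?thesis unfolding rainbow_vertex_path_def q4 by (simp add: map_proj)
    qed
    moreover have "hd (proj p) = u" "last (proj p) = v" unfolding q4 by simp_all
    ultimately show ?thesis by blast
  qed
qed

theorem theorem2:
  fixes VG :: "'a set" and EG :: "'a set set" and VH :: "'b set" and EH :: "'b set set"
    and m n :: nat
  assumes "m \<ge> 2" and "n \<ge> 2"
    and "simple_graph VG EG" and "connected_graph VG EG" and "card VG = m"
    and "simple_graph VH EH" and "connected_graph VH EH" and "card VH = n"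
  shows "rvc (ecorona_V VG EG VH) (ecorona_E EG VH EH) \<ge> rvc VG EG"
proof -
  let ?V = "ecorona_V VG EG VH" and ?E = "ecorona_E EG VH EH"
  obtain k0 c0 where c0h: "rv_coloring ?V ?E c0 k0" using corona_colorable assms by blast
  have "\<exists>c. rv_coloring ?V ?E c (rvc ?V ?E)" unfolding rvc_def
    apply (rule LeastI_ex) using c0h by blast
  then obtain c where "rv_coloring ?V ?E c (rvc ?V ?E)" by blast
  then have "rv_coloring VG EG (\<lambda>v. c (Inl v)) (rvc ?V ?E)" using transfer_coloring assms(3) by blast
  then show ?thesis unfolding rvc_def[of VG EG] by (intro Least_le) blast
qed

end
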